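(* Let $G$ be a closed graph on a compact metrizable space $X$. Then: (a) $P_G$ is $\sigma$-centered iff $\chi(G)\leq\aleph_0$; (b) $P_G$ is $\sigma$-liminf-centered iff $\lambda(G)\leq\aleph_0$.
   Context: A graph $G$ on $X$ is a symmetric irreflexive relation, closed if closed in $(X\times X)\setminus$ diagonal. A $G$-anticlique is a set with no two distinct $G$-connected points; $\chi(G)$ is the least size of a family of $G$-anticliques covering $X$. A set $A\subset X$ is $G$-loose if every $x\in X$ has an open neighborhood containing no elements of $A$ that are $G$-connected to $x$; $\lambda(G)$ is the least size of a family of $G$-loose sets covering $X$. $P_G$ is the poset of pairs $p=\langle a_p,o_p\rangle$ with $a_p\subset X$ a finite $G$-anticlique and $o_p\supset a_p$ open, ordered by $q\leq p$ iff $a_p\subset a_q$ and $o_q\subset o_p$. For a poset $P$, a set $A\subset P$ is centered if every finite $b\subset A$ has a common lower bound in $P$; $P$ is $\sigma$-centered if it is a countable union of centered sets. A set $A\subset P$ is liminf centered if for every sequence $\langle p_i\colon i\in\omega\rangle$ of elements of $A$ there is $q\in P$ such that for every $r\leq q$ the set $\{i\in\omega\colon p_i$ is compatible with $r\}$ is infinite; $P$ is $\sigma$-liminf-centered if it is a countable union of liminf centered sets. *)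

theory Defs
  imports "HOL-Analysis.Analysis"
begin

definition is_graph :: "'a topology \<Rightarrow> ('a \<times> 'a) set \<Rightarrow> bool" where
  "is_graph T G \<longleftrightarrow> G \<subseteq> topspace T \<times> topspace T \<and> sym G \<and> (\<forall>x. (x, x) \<notin> G)"

definition closed_graph :: "'a topology \<Rightarrow> ('a \<times> 'a) set \<Rightarrow> bool" where
  "closed_graph T G \<longleftrightarrow> is_graph T G \<and>
     closedin (subtopology (prod_topology T T)
                 ((topspace T \<times> topspace T) - {(x, x) | x. True})) G"

definition anticlique :: "'a topology \<Rightarrow> ('a \<times> 'a) set \<Rightarrow> 'a set \<Rightarrow> bool" where
  "anticlique T G A \<longleftrightarrow> A \<subseteq> topspace T \<and> (\<forall>x\<in>A. \<forall>y\<in>A. x \<noteq> y \<longrightarrow> (x, y) \<notin> G)"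

definition loose :: "'a topology \<Rightarrow> ('a \<times> 'a) set \<Rightarrow> 'a set \<Rightarrow> bool" where
  "loose T G A \<longleftrightarrow> A \<subseteq> topspace T \<and>
     (\<forall>x\<in>topspace T. \<exists>U. openin T U \<and> x \<in> U \<and> (\<forall>a\<in>A \<inter> U. (x, a) \<notin> G))"

definition chi_countable :: "'a topology \<Rightarrow> ('a \<times> 'a) set \<Rightarrow> bool" where
  "chi_countable T G \<longleftrightarrow> (\<exists>F. countable F \<and> (\<forall>A\<in>F. anticlique T G A) \<and> topspace T \<subseteq> \<Union>F)"

definition lambda_countable :: "'a topology \<Rightarrow> ('a \<times> 'a) set \<Rightarrow> bool" where
  "lambda_countable T G \<longleftrightarrow> (\<exists>F. countable F \<and> (\<forall>A\<in>F. loose T G A) \<and> topspace T \<subseteq> \<Union>F)"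

definition PG :: "'a topology \<Rightarrow> ('a \<times> 'a) set \<Rightarrow> ('a set \<times> 'a set) set" where
  "PG T G = {(a, U). finite a \<and> anticlique T G a \<and> openin T U \<and> a \<subseteq> U}"

definition PG_le :: "('a set \<times> 'a set) \<Rightarrow> ('a set \<times> 'a set) \<Rightarrow> bool" where
  "PG_le q p \<longleftrightarrow> fst p \<subseteq> fst q \<and> snd q \<subseteq> snd p"

definition centered :: "'p set \<Rightarrow> ('p \<Rightarrow> 'p \<Rightarrow> bool) \<Rightarrow> 'p set \<Rightarrow> bool" where
  "centered P le A \<longleftrightarrow> A \<subseteq> P \<and>
     (\<forall>b. finite b \<and> b \<subseteq> A \<longrightarrow> (\<exists>q\<in>P. \<forall>p\<in>b. le q p))"

definition sigma_centered :: "'p set \<Rightarrow> ('p \<Rightarrow> 'p \<Rightarrow> bool) \<Rightarrow> bool" where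
  "sigma_centered P le \<longleftrightarrow> (\<exists>F. countable F \<and> (\<forall>A\<in>F. centered P le A) \<and> \<Union>F = P)"

definition compatible :: "'p set \<Rightarrow> ('p \<Rightarrow> 'p \<Rightarrow> bool) \<Rightarrow> 'p \<Rightarrow> 'p \<Rightarrow> bool" where
  "compatible P le p r \<longleftrightarrow> (\<exists>s\<in>P. le s p \<and> le s r)"

definition liminf_centered :: "'p set \<Rightarrow> ('p \<Rightarrow> 'p \<Rightarrow> bool) \<Rightarrow> 'p set \<Rightarrow> bool" where
  "liminf_centered P le A \<longleftrightarrow> A \<subseteq> P \<and>
     (\<forall>s :: nat \<Rightarrow> 'p. range s \<subseteq> A \<longrightarrow>
        (\<exists>q\<in>P. \<forall>r\<in>P. le r q \<longrightarrow> infinite {i. compatible P le (s i) r}))"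

definition sigma_liminf_centered :: "'p set \<Rightarrow> ('p \<Rightarrow> 'p \<Rightarrow> bool) \<Rightarrow> bool" where
  "sigma_liminf_centered P le \<longleftrightarrow>
     (\<exists>F. countable F \<and> (\<forall>A\<in>F. liminf_centered P le A) \<and> \<Union>F = P)"

end

theory Submission
  imports Defs
begin

lemma closed_graph_sep:
  assumes cg: "closed_graph T G" and z: "z \<in> topspace T" and w: "w \<in> topspace T"
    and zw: "z \<noteq> w" and nG: "(z,w) \<notin> G"
  shows "\<exists>V W. openin T V \<and> openin T W \<and> z \<in> V \<and> w \<in> W \<and> (\<forall>a\<in>V. \<forall>b\<in>W. (a,b) \<notin> G)"
proof -
  let ?S = "(topspace T \<times> topspace T) - {(x, x) | x. True}"
  from cg obtain D where D: "closedin (prod_topology T T) D" and GD: "G = D \<inter> ?S"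
    unfolding closed_graph_def closedin_subtopology by blast
  have "(z,w) \<notin> D" using nG GD z w zw by auto
  hence zwin: "(z,w) \<in> topspace (prod_topology T T) - D" using z w by simp
  have "openin (prod_topology T T) (topspace (prod_topology T T) - D)"
    using D by blast
  then obtain V W where "openin T V" "openin T W" "z \<in> V" "w \<in> W"
      "V \<times> W \<subseteq> topspace (prod_topology T T) - D"
    using zwin unfolding openin_prod_topology_alt by meson
  then show ?thesis using GD by blast
qed
lemma cluster_point:
  assumes "compact_space Y" and f: "\<And>m. f m \<in> topspace Y"
  shows "\<exists>y\<in>topspace Y. \<forall>U. openin Y U \<and> y \<in> U \<longrightarrow> infinite {m::nat. f m \<in> U}"
proof (rule ccontr)
  assume "\<not> ?thesis"
  then have "\<forall>y\<in>topspace Y. \<exists>U. openin Y U \<and> y \<in> U \<and> finite {m::nat. f m \<in> U}" by blast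
  then obtain U where U: "\<forall>y\<in>topspace Y. openin Y (U y) \<and> y \<in> U y \<and> finite {m::nat. f m \<in> U y}"
    by (auto dest!: bchoice)
  have cov: "topspace Y \<subseteq> \<Union>(U ` topspace Y)" using U by blast
  have "\<exists>F. finite F \<and> F \<subseteq> U ` topspace Y \<and> topspace Y \<subseteq> \<Union>F"
    using assms(1)[unfolded compact_space_alt, rule_format, of "U ` topspace Y"] U cov by blast
  then obtain F where F: "finite F" "F \<subseteq> U ` topspace Y" "topspace Y \<subseteq> \<Union>F" by blast
  have "UNIV \<subseteq> (\<Union>V\<in>F. {m. f m \<in> V})" using F(3) f by blast
  moreover have "finite (\<Union>V\<in>F. {m. f m \<in> V})" using F U by auto
  ultimately show False using finite_subset infinite_UNIV_nat by blast
qed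




lemma (in Metric_space) compact_second_countable:
  assumes "compact_space mtopology"
  shows "second_countable mtopology"
proof -
  have "\<forall>n::nat. \<exists>N. finite N \<and> N \<subseteq> M \<and> M \<subseteq> (\<Union>c\<in>N. mball c (1 / Suc n))"
  proof
    fix n :: nat
    have cov: "topspace mtopology \<subseteq> \<Union>((\<lambda>x. mball x (1 / Suc n)) ` M)" by auto
    have "\<exists>F. finite F \<and> F \<subseteq> (\<lambda>x. mball x (1 / Suc n)) ` M \<and> topspace mtopology \<subseteq> \<Union>F"
      using assms[unfolded compact_space_alt, rule_format, of "(\<lambda>x. mball x (1 / Suc n)) ` M"] cov
      by blast
    then obtain F where F: "finite F" "F \<subseteq> (\<lambda>x. mball x (1 / Suc n)) ` M" "M \<subseteq> \<Union>F" by auto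
    then obtain N where "N \<subseteq> M" "finite N" "F = (\<lambda>x. mball x (1 / Suc n)) ` N"
      using finite_subset_image[OF F(1) F(2)] by blast
    then show "\<exists>N. finite N \<and> N \<subseteq> M \<and> M \<subseteq> (\<Union>c\<in>N. mball c (1 / Suc n))" using F(3) by blast
  qed
  then obtain N where N: "\<And>n. finite (N n) \<and> N n \<subseteq> M \<and> M \<subseteq> (\<Union>c\<in>N n. mball c (1 / Suc n))"
    by (auto dest!: choice)
  define B where "B = (\<Union>n. (\<lambda>c. mball c (1 / Suc n)) ` N n)"
  have "countable B" unfolding B_def using N by (simp add: countable_finite)
  moreover have "\<forall>V\<in>B. openin mtopology V" unfolding B_def by auto
  moreover have "\<exists>V\<in>B. x \<in> V \<and> V \<subseteq> U" if U: "openin mtopology U" "x \<in> U" for U x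
  proof -
    obtain r where r: "r > 0" "mball x r \<subseteq> U" using U openin_mtopology by blast
    obtain n :: nat where n: "inverse (of_nat (Suc n)) < r / 2"
      using reals_Archimedean[of "r/2"] r(1) by auto
    have xM: "x \<in> M" using U openin_mtopology by blast
    then obtain c where c: "c \<in> N n" "x \<in> mball c (1 / Suc n)" using N[of n] by blast
    have cM: "c \<in> M" using c N by blast
    have "mball c (1 / Suc n) \<subseteq> mball x r"
    proof
      fix y assume y: "y \<in> mball c (1 / Suc n)"
      then have yM: "y \<in> M" by simp
      have "d x y \<le> d x c + d c y" using triangle xM cM yM by blast
      also have "\<dots> < 1 / Suc n + 1 / Suc n" using c y by (simp add: commute add_strict_mono)
      also have "\<dots> < r" using n by (simp add: inverse_eq_divide)
      finally show "y \<in> mball x r" using xM yM by simp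
    qed
    then show ?thesis using c r unfolding B_def by blast
  qed
  ultimately show ?thesis unfolding second_countable_def by blast
qed




definition cls :: "'a topology \<Rightarrow> ('a \<times> 'a) set \<Rightarrow> ('a set \<times> 'a set \<times> 'a set) set \<Rightarrow> ('a set \<times> 'a set) set" where
"cls T G S = {p \<in> PG T G.
   (\<forall>t\<in>S. T closure_of (fst t) \<subseteq> fst (snd t) \<and> openin T (fst (snd t)) \<and> fst (snd t) \<subseteq> snd p \<and>
           (\<exists>x. fst p \<inter> fst t = {x} \<and> x \<in> snd (snd t))) \<and>
   fst p \<subseteq> \<Union>(fst ` S) \<and>
   (\<forall>t\<in>S. \<forall>t'\<in>S. t \<noteq> t' \<longrightarrow> (\<forall>u\<in>fst (snd t). \<forall>v\<in>fst (snd t'). (u,v) \<notin> G))}"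

lemma cls_cover:
  assumes cg: "closed_graph T G" and H: "Hausdorff_space T" and R: "regular_space T"
    and Bo: "\<forall>V\<in>B. openin T V"
    and Bb: "\<forall>U x. openin T U \<and> x \<in> U \<longrightarrow> (\<exists>V\<in>B. x \<in> V \<and> V \<subseteq> U)"
    and Fc: "topspace T \<subseteq> \<Union>F" and p: "p \<in> PG T G"
  shows "\<exists>S. finite S \<and> S \<subseteq> B \<times> B \<times> F \<and> p \<in> cls T G S"
proof -
  obtain a ov where po: "p = (a,ov)" by fastforce
  have a: "finite a" "anticlique T G a" "openin T ov" "a \<subseteq> ov" using p po unfolding PG_def by auto
  have aX: "a \<subseteq> topspace T" using a(2) unfolding anticlique_def by blast
  define Q where "Q x y VW \<longleftrightarrow> (x \<in> a \<and> y \<in> a \<and> x \<noteq> y \<longrightarrow>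
      openin T (fst VW) \<and> openin T (snd VW) \<and> x \<in> fst VW \<and> y \<in> snd VW \<and> fst VW \<inter> snd VW = {} \<and>
      (\<forall>u\<in>fst VW. \<forall>v\<in>snd VW. (u,v) \<notin> G))" for x y VW
  have Qex: "\<exists>VW. Q x y VW" for x y
  proof (cases "x \<in> a \<and> y \<in> a \<and> x \<noteq> y")
    case True
    then have xy: "x \<in> topspace T" "y \<in> topspace T" "x \<noteq> y" "(x,y) \<notin> G"
      using aX a(2) unfolding anticlique_def by auto
    obtain V1 W1 where 1: "openin T V1" "openin T W1" "x \<in> V1" "y \<in> W1" "(\<forall>u\<in>V1. \<forall>v\<in>W1. (u,v) \<notin> G)"
      using closed_graph_sep[OF cg xy] by blast
    obtain V2 W2 where 2: "openin T V2" "openin T W2" "x \<in> V2" "y \<in> W2" "disjnt V2 W2"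
      using H xy unfolding Hausdorff_space_def by blast
    show ?thesis
      apply (rule exI[of _ "(V1 \<inter> V2, W1 \<inter> W2)"])
      using 1 2 by (auto simp: disjnt_def Q_def)
  qed (auto simp: Q_def)
  have "\<forall>x. \<exists>g. \<forall>y. Q x y (g y)" using Qex by (blast intro: choice)
  then have "\<exists>f. \<forall>x. \<forall>y. Q x y (f x y)" by (rule choice)
  then obtain sep where sepQ: "\<And>x y. Q x y (sep x y)" by blast
  have sep: "openin T (fst (sep x y)) \<and> openin T (snd (sep x y)) \<and> x \<in> fst (sep x y) \<and> y \<in> snd (sep x y) \<and>
      fst (sep x y) \<inter> snd (sep x y) = {} \<and>
      (\<forall>u\<in>fst (sep x y). \<forall>v\<in>snd (sep x y). (u,v) \<notin> G)" if "x \<in> a" "y \<in> a" "x \<noteq> y" for x y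
    using sepQ[of x y] that unfolding Q_def by blast
  define c' where "c' x = ov \<inter> \<Inter>((\<lambda>y. fst (sep x y) \<inter> snd (sep y x)) ` (a - {x}))" for x
  have c'o: "openin T (c' x)" if "x \<in> a" for x
    unfolding c'_def using that sep a by (intro openin_Int_Inter) auto
  have c'x: "x \<in> c' x" if "x \<in> a" for x
    unfolding c'_def using that sep a by auto
  have c'sub: "c' x \<subseteq> ov" for x unfolding c'_def by auto
  have c'sep: "c' x \<subseteq> fst (sep x y)" "c' y \<subseteq> snd (sep x y)" if "x \<in> a" "y \<in> a" "x \<noteq> y" for x y
    unfolding c'_def using that by auto
  have "\<forall>x\<in>a. \<exists>t. t \<in> B \<times> B \<times> F \<and> x \<in> fst t \<and> T closure_of (fst t) \<subseteq> fst (snd t) \<and>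
      fst (snd t) \<subseteq> c' x \<and> openin T (fst (snd t)) \<and> x \<in> fst (snd t) \<and> x \<in> snd (snd t)"
  proof
    fix x assume x: "x \<in> a"
    obtain c where c: "c \<in> B" "x \<in> c" "c \<subseteq> c' x" using Bb c'o[OF x] c'x[OF x] by blast
    have co: "openin T c" using Bo c by blast
    have "closedin T (topspace T - c) \<and> x \<in> topspace T - (topspace T - c)" using co c aX x by auto
    then obtain U where U: "openin T U" "x \<in> U" "disjnt (topspace T - c) (T closure_of U)"
      using R unfolding regular_space by blast
    have clU: "T closure_of U \<subseteq> c" using U(3) closure_of_subset_topspace[of T U]
      unfolding disjnt_def by blast
    obtain b where b: "b \<in> B" "x \<in> b" "b \<subseteq> U" using Bb U by blast
    have clb: "T closure_of b \<subseteq> c" using closure_of_mono[OF b(3)] clU by blast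
    obtain L where L: "L \<in> F" "x \<in> L" using Fc aX x by blast
    show "\<exists>t. t \<in> B \<times> B \<times> F \<and> x \<in> fst t \<and> T closure_of (fst t) \<subseteq> fst (snd t) \<and>
      fst (snd t) \<subseteq> c' x \<and> openin T (fst (snd t)) \<and> x \<in> fst (snd t) \<and> x \<in> snd (snd t)"
      apply (rule exI[of _ "(b, c, L)"])
      using b c co clb L by auto
  qed
  then have "\<exists>tt. \<forall>x\<in>a. tt x \<in> B \<times> B \<times> F \<and> x \<in> fst (tt x) \<and>
      T closure_of (fst (tt x)) \<subseteq> fst (snd (tt x)) \<and>
      fst (snd (tt x)) \<subseteq> c' x \<and> openin T (fst (snd (tt x))) \<and> x \<in> fst (snd (tt x)) \<and> x \<in> snd (snd (tt x))"
    by (rule bchoice)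
  then obtain tt where tt: "\<And>x. x \<in> a \<Longrightarrow> tt x \<in> B \<times> B \<times> F \<and> x \<in> fst (tt x) \<and>
      T closure_of (fst (tt x)) \<subseteq> fst (snd (tt x)) \<and>
      fst (snd (tt x)) \<subseteq> c' x \<and> openin T (fst (snd (tt x))) \<and> x \<in> fst (snd (tt x)) \<and> x \<in> snd (snd (tt x))"
    by blast
  have disj: "fst (snd (tt x)) \<inter> fst (snd (tt y)) = {} \<and>
      (\<forall>u\<in>fst (snd (tt x)). \<forall>v\<in>fst (snd (tt y)). (u,v) \<notin> G)" if "x \<in> a" "y \<in> a" "x \<noteq> y" for x y
  proof -
    have "fst (snd (tt x)) \<subseteq> fst (sep x y)" "fst (snd (tt y)) \<subseteq> snd (sep x y)"
      using c'sep[OF that] tt that by blast+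
    then show ?thesis using sep[OF that] by blast
  qed
  have fstsub: "fst (tt x) \<inter> topspace T \<subseteq> fst (snd (tt x))" if "x \<in> a" for x
    using closure_of_subset_Int[of T "fst (tt x)"] tt[OF that] by blast
  define S where "S = tt ` a"
  have "finite S" unfolding S_def using a by simp
  moreover have "S \<subseteq> B \<times> B \<times> F" unfolding S_def using tt by blast
  moreover have "p \<in> cls T G S"
    unfolding cls_def
  proof (intro CollectI conjI ballI impI)
    show "p \<in> PG T G" by (rule p)
    fix t assume "t \<in> S"
    then obtain x where x: "x \<in> a" "t = tt x" unfolding S_def by blast
    show "T closure_of fst t \<subseteq> fst (snd t)" "openin T (fst (snd t))" using tt x by auto
    show "fst (snd t) \<subseteq> snd p" using tt[OF x(1)] c'sub x po by auto
    have "fst p \<inter> fst t = {x}"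
    proof
      show "{x} \<subseteq> fst p \<inter> fst t" using x tt po by auto
      show "fst p \<inter> fst t \<subseteq> {x}"
      proof
        fix y assume y: "y \<in> fst p \<inter> fst t"
        then have ya: "y \<in> a" using po by simp
        show "y \<in> {x}"
        proof (rule ccontr)
          assume "y \<notin> {x}"
          then have "x \<noteq> y" by simp
          moreover have "y \<in> fst (snd (tt x))" using fstsub[OF x(1)] y ya aX x(2) by blast
          moreover have "y \<in> fst (snd (tt y))" using tt[OF ya] by blast
          ultimately show False using disj[OF x(1) ya] by blast
        qed
      qed
    qed
    then show "\<exists>x. fst p \<inter> fst t = {x} \<and> x \<in> snd (snd t)" using tt x by blast
  next
    show "fst p \<subseteq> \<Union>(fst ` S)" using po tt unfolding S_def by fastforce
  next
    fix t t' u v assume tS: "t \<in> S" and t'S: "t' \<in> S" and ne: "t \<noteq> t'"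
      and u: "u \<in> fst (snd t)" and v: "v \<in> fst (snd t')"
    obtain x where x: "x \<in> a" "t = tt x" using tS unfolding S_def by blast
    obtain y where y: "y \<in> a" "t' = tt y" using t'S unfolding S_def by blast
    have "x \<noteq> y" using ne x y by blast
    then show "(u,v) \<notin> G" using disj[OF x(1) y(1)] u v x y by blast
  qed
  ultimately show ?thesis by blast
qed


lemma clsD:
  assumes "p \<in> cls T G S"
  shows clsD_PG: "p \<in> PG T G"
    and clsD_cl: "\<And>t. t \<in> S \<Longrightarrow> T closure_of (fst t) \<subseteq> fst (snd t)"
    and clsD_op: "\<And>t. t \<in> S \<Longrightarrow> openin T (fst (snd t))"
    and clsD_sub: "\<And>t. t \<in> S \<Longrightarrow> fst (snd t) \<subseteq> snd p"
    and clsD_one: "\<And>t. t \<in> S \<Longrightarrow> \<exists>x. fst p \<inter> fst t = {x} \<and> x \<in> snd (snd t)"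
    and clsD_cov: "fst p \<subseteq> \<Union>(fst ` S)"
    and clsD_cross: "\<And>t t' u v. t \<in> S \<Longrightarrow> t' \<in> S \<Longrightarrow> t \<noteq> t' \<Longrightarrow> u \<in> fst (snd t) \<Longrightarrow>
        v \<in> fst (snd t') \<Longrightarrow> (u,v) \<notin> G"
  using assms unfolding cls_def by auto

lemma cls_PG: "cls T G S \<subseteq> PG T G" using clsD_PG by blast

lemma cls_elem:
  assumes p: "p \<in> cls T G S" and u: "u \<in> fst p"
  shows "\<exists>t\<in>S. u \<in> fst t \<and> u \<in> snd (snd t) \<and> u \<in> fst (snd t)"
proof -
  have pP: "p \<in> PG T G" using clsD_PG[OF p] .
  have uX: "u \<in> topspace T" using pP u unfolding PG_def anticlique_def by auto
  obtain t where t: "t \<in> S" "u \<in> fst t" using clsD_cov[OF p] u by blast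
  obtain x where x: "fst p \<inter> fst t = {x}" "x \<in> snd (snd t)" using clsD_one[OF p t(1)] by blast
  have "u = x" using x(1) u t(2) by blast
  moreover have "u \<in> fst (snd t)" using closure_of_subset_Int[of T "fst t"] clsD_cl[OF p t(1)] uX t(2) by blast
  ultimately show ?thesis using t x by blast
qed

lemma cls_centered:
  assumes FA: "\<forall>L\<in>F. anticlique T G L" and SF: "snd ` snd ` S \<subseteq> F"
  shows "centered (PG T G) PG_le (cls T G S)"
  unfolding centered_def
proof (intro conjI allI impI)
  show "cls T G S \<subseteq> PG T G" by (rule cls_PG)
  fix b assume b: "finite b \<and> b \<subseteq> cls T G S"
  show "\<exists>q\<in>PG T G. \<forall>p\<in>b. PG_le q p"
  proof (cases "b = {}")
    case True
    have "({}, {}) \<in> PG T G" unfolding PG_def anticlique_def by auto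
    then show ?thesis using True by blast
  next
    case False
    then obtain p0 where p0: "p0 \<in> b" by blast
  define q where "q = (\<Union>(fst ` b), \<Union>((fst \<circ> snd) ` S))"
  have bP: "\<And>p. p \<in> b \<Longrightarrow> p \<in> PG T G" using b cls_PG by blast
  have qfin: "finite (fst q)" using b bP unfolding q_def PG_def by auto
  have qX: "fst q \<subseteq> topspace T" using bP unfolding q_def PG_def anticlique_def by fastforce
  have qanti: "\<forall>u\<in>fst q. \<forall>v\<in>fst q. u \<noteq> v \<longrightarrow> (u, v) \<notin> G"
  proof (intro ballI impI)
    fix u v assume u: "u \<in> fst q" and v: "v \<in> fst q" and uv: "u \<noteq> v"
    obtain p where p: "p \<in> b" "u \<in> fst p" using u unfolding q_def by auto
    obtain p' where p': "p' \<in> b" "v \<in> fst p'" using v unfolding q_def by auto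
    have pc: "p \<in> cls T G S" "p' \<in> cls T G S" using p p' b by auto
    obtain t where t: "t \<in> S" "u \<in> fst t" "u \<in> snd (snd t)" "u \<in> fst (snd t)"
      using cls_elem[OF pc(1) p(2)] by blast
    obtain t' where t': "t' \<in> S" "v \<in> fst t'" "v \<in> snd (snd t')" "v \<in> fst (snd t')"
      using cls_elem[OF pc(2) p'(2)] by blast
    show "(u,v) \<notin> G"
    proof (cases "t = t'")
      case True
      then have "anticlique T G (snd (snd t))" using FA SF t(1) by blast
      then show ?thesis using True t t' uv unfolding anticlique_def by blast
    next
      case False
      then show ?thesis using clsD_cross[OF pc(1) t(1) t'(1) False t(4) t'(4)] by blast
    qed
  qed
  have qopen: "openin T (snd q)"
    unfolding q_def using clsD_op[of p0] b p0 by (auto intro!: openin_Union)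
  have qsub: "fst q \<subseteq> snd q"
  proof
    fix u assume "u \<in> fst q"
    then obtain p where p: "p \<in> b" "u \<in> fst p" unfolding q_def by auto
    have pc: "p \<in> cls T G S" using p b by auto
    show "u \<in> snd q" using cls_elem[OF pc p(2)] unfolding q_def by auto
  qed
  have "q \<in> PG T G" using qfin qX qanti qopen qsub unfolding PG_def anticlique_def
    by (cases q) auto
  moreover have "\<forall>p\<in>b. PG_le q p"
  proof
    fix p assume p: "p \<in> b"
    then have pc: "p \<in> cls T G S" using b by auto
    have "snd q \<subseteq> snd p" using clsD_sub[OF pc] unfolding q_def by auto
    moreover have "fst p \<subseteq> fst q" using p unfolding q_def by auto
    ultimately show "PG_le q p" unfolding PG_le_def by blast
  qed
  ultimately show ?thesis by blast
  qed
qed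




lemma PG_mem: "p \<in> PG T G \<longleftrightarrow> finite (fst p) \<and> fst p \<subseteq> topspace T \<and>
   (\<forall>u\<in>fst p. \<forall>v\<in>fst p. u \<noteq> v \<longrightarrow> (u, v) \<notin> G) \<and> openin T (snd p) \<and> fst p \<subseteq> snd p"
  by (cases p) (auto simp: PG_def anticlique_def)

lemma cls_liminf:
  assumes cs: "compact_space T" and cg: "closed_graph T G" and FL: "\<forall>L\<in>F. loose T G L"
    and SF: "snd ` snd ` S \<subseteq> F" and fin: "finite S"
  shows "liminf_centered (PG T G) PG_le (cls T G S)"
  unfolding liminf_centered_def
proof (intro conjI allI impI)
  show "cls T G S \<subseteq> PG T G" by (rule cls_PG)
  fix s :: "nat \<Rightarrow> 'a set \<times> 'a set" assume rs: "range s \<subseteq> cls T G S"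
  have sc: "\<And>m. s m \<in> cls T G S" using rs by blast
  have sP: "\<And>m. s m \<in> PG T G" using sc clsD_PG by blast
  have sX: "\<And>m. fst (s m) \<subseteq> topspace T" using sP unfolding PG_mem by blast
  have gr: "is_graph T G" using cg unfolding closed_graph_def by blast
  have symG: "\<And>u v. (u,v) \<in> G \<Longrightarrow> (v,u) \<in> G" using gr unfolding is_graph_def sym_def by blast
  define xs :: "nat \<Rightarrow> 'a set \<times> 'a set \<times> 'a set \<Rightarrow> 'a" where "xs m t = the_elem (fst (s m) \<inter> fst t)" for m t
  have xs1: "xs m t \<in> fst (s m) \<and> xs m t \<in> fst t \<and> xs m t \<in> snd (snd t) \<and> xs m t \<in> fst (snd t)"
    if t: "t \<in> S" for m t
  proof -
    obtain x where x: "fst (s m) \<inter> fst t = {x}" "x \<in> snd (snd t)" using clsD_one[OF sc t] by blast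
    have xe: "xs m t = x" unfolding xs_def using x(1) by simp
    have "x \<in> topspace T" using x(1) sX[of m] by blast
    then have "x \<in> fst (snd t)" using closure_of_subset_Int[of T "fst t"] clsD_cl[OF sc t] x(1) by blast
    then show ?thesis using xe x by blast
  qed
  have xs2: "\<exists>t\<in>S. u = xs m t" if u: "u \<in> fst (s m)" for m u
  proof -
    obtain t where t: "t \<in> S" "u \<in> fst t" using clsD_cov[OF sc] u by blast
    obtain x where x: "fst (s m) \<inter> fst t = {x}" using clsD_one[OF sc t(1)] by blast
    have "u = x" using x u t(2) by blast
    then show ?thesis using t(1) x unfolding xs_def by (intro bexI[of _ t]) auto
  qed
  define Y where "Y = product_topology (\<lambda>_. T) S"
  define f where "f m = restrict (xs m) S" for m
  have cY: "compact_space Y" unfolding Y_def using cs by (simp add: compact_space_product_topology)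
  have fY: "f m \<in> topspace Y" for m
  proof -
    have "\<forall>t\<in>S. xs m t \<in> topspace T" using xs1 sX by blast
    then show ?thesis unfolding Y_def f_def by (simp add: PiE_iff)
  qed
  have "\<exists>y\<in>topspace Y. \<forall>U. openin Y U \<and> y \<in> U \<longrightarrow> infinite {m. f m \<in> U}"
    by (rule cluster_point[OF cY fY])
  then obtain y where yY: "y \<in> topspace Y" and ycl0: "\<forall>U. openin Y U \<and> y \<in> U \<longrightarrow> infinite {m. f m \<in> U}"
    by (rule bexE)
  have ycl: "infinite {m. f m \<in> U}" if "openin Y U" "y \<in> U" for U using ycl0 that by simp
  have yE: "y \<in> (\<Pi>\<^sub>E t\<in>S. topspace T)" using yY unfolding Y_def by simp
  have nbhd: "infinite {m. \<forall>t\<in>S. xs m t \<in> W t}"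
    if W: "\<And>t. t \<in> S \<Longrightarrow> openin T (W t) \<and> y t \<in> W t" for W
  proof -
    have f1: "finite {i \<in> S. W i \<noteq> topspace T}" using fin by simp
    have f2: "\<forall>i\<in>S. openin T (W i)" using W by blast
    have o: "openin Y (Pi\<^sub>E S W)" unfolding Y_def openin_PiE_gen using f1 f2 by blast
    have "y \<in> Pi\<^sub>E S W" using yE W by (auto simp: PiE_iff)
    then have "infinite {m. f m \<in> Pi\<^sub>E S W}" using ycl o by blast
    moreover have "{m. f m \<in> Pi\<^sub>E S W} \<subseteq> {m. \<forall>t\<in>S. xs m t \<in> W t}" unfolding f_def by auto
    ultimately show ?thesis using infinite_super by blast
  qed
  have yX: "y t \<in> topspace T" if "t \<in> S" for t using yE that by auto
  have yc: "y t \<in> fst (snd t)" if t: "t \<in> S" for t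
  proof -
    have "y t \<in> T closure_of (fst t)"
    proof (rule ccontr)
      assume nc: "y t \<notin> T closure_of (fst t)"
      define W where "W t' = (if t' = t then topspace T - T closure_of (fst t) else topspace T)" for t'
      have "infinite {m. \<forall>t\<in>S. xs m t \<in> W t}"
        by (rule nbhd) (auto simp: W_def yX nc)
      then obtain m where "\<forall>t\<in>S. xs m t \<in> W t" using not_finite_existsD by blast
      then have "xs m t \<notin> T closure_of (fst t)" using t unfolding W_def by auto
      moreover have "xs m t \<in> topspace T \<inter> fst t" using xs1[OF t] sX[of m] by blast
      ultimately show False using closure_of_subset_Int[of T "fst t"] by blast
    qed
    then show ?thesis using clsD_cl[OF sc[of 0] t] by blast
  qed
  define q where "q = (y ` S, \<Union>((fst \<circ> snd) ` S))"
  have qP: "q \<in> PG T G"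
  proof -
    have "finite (y ` S)" using fin by simp
    moreover have "y ` S \<subseteq> topspace T" using yX by blast
    moreover have "\<forall>u\<in>y ` S. \<forall>v\<in>y ` S. u \<noteq> v \<longrightarrow> (u, v) \<notin> G"
    proof (intro ballI impI)
      fix u v assume "u \<in> y ` S" "v \<in> y ` S" "u \<noteq> v"
      then obtain t t' where tt: "t \<in> S" "t' \<in> S" "u = y t" "v = y t'" "t \<noteq> t'" by blast
      have "(y t, y t') \<notin> G" by (rule clsD_cross[OF sc[of 0] tt(1) tt(2) tt(5) yc[OF tt(1)] yc[OF tt(2)]])
      then show "(u,v) \<notin> G" using tt(3,4) by simp
    qed
    moreover have "openin T (\<Union>((fst \<circ> snd) ` S))" using clsD_op[OF sc[of 0]] by (auto intro!: openin_Union)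
    moreover have "y ` S \<subseteq> \<Union>((fst \<circ> snd) ` S)" using yc by auto
    ultimately show ?thesis unfolding q_def PG_mem by simp
  qed
  define LUP where "LUP L x U \<longleftrightarrow> (L \<in> F \<and> x \<in> topspace T \<longrightarrow> openin T U \<and> x \<in> U \<and> (\<forall>a\<in>L \<inter> U. (x,a) \<notin> G))"
    for L x U
  have exU: "\<exists>U. LUP L x U" for L x
  proof (cases "L \<in> F \<and> x \<in> topspace T")
    case True
    then have "loose T G L" using FL by blast
    then obtain U where "openin T U \<and> x \<in> U \<and> (\<forall>a\<in>L \<inter> U. (x,a) \<notin> G)"
      using True unfolding loose_def by blast
    then show ?thesis unfolding LUP_def by blast
  qed (auto simp: LUP_def)
  have "\<forall>L. \<exists>g. \<forall>x. LUP L x (g x)"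
  proof
    fix L show "\<exists>g. \<forall>x. LUP L x (g x)" by (rule choice) (simp add: exU)
  qed
  then have "\<exists>LU. \<forall>L. \<forall>x. LUP L x (LU L x)" by (rule choice)
  then obtain LU where LU: "\<And>L x. LUP L x (LU L x)" by blast
  define SWP where "SWP z w W \<longleftrightarrow> (z \<in> topspace T \<and> w \<in> topspace T \<and> z \<noteq> w \<and> (z,w) \<notin> G \<longrightarrow>
      openin T W \<and> w \<in> W \<and> (\<forall>b\<in>W. (z,b) \<notin> G))" for z w W
  have exW: "\<exists>W. SWP z w W" for z w
  proof (cases "z \<in> topspace T \<and> w \<in> topspace T \<and> z \<noteq> w \<and> (z,w) \<notin> G")
    case True
    then obtain V W where "openin T V" "openin T W" "z \<in> V" "w \<in> W" "\<forall>a\<in>V. \<forall>b\<in>W. (a,b) \<notin> G"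
      using closed_graph_sep[OF cg, of z w] True by blast
    then show ?thesis unfolding SWP_def by blast
  qed (auto simp: SWP_def)
  have "\<forall>z. \<exists>g. \<forall>w. SWP z w (g w)"
  proof
    fix z show "\<exists>g. \<forall>w. SWP z w (g w)" by (rule choice) (simp add: exW)
  qed
  then have "\<exists>SW. \<forall>z. \<forall>w. SWP z w (SW z w)" by (rule choice)
  then obtain SW where SW: "\<And>z w. SWP z w (SW z w)" by blast
  show "\<exists>q\<in>PG T G. \<forall>r\<in>PG T G. PG_le r q \<longrightarrow> infinite {i. compatible (PG T G) PG_le (s i) r}"
  proof (intro bexI[OF _ qP] ballI impI)
    fix r assume rP: "r \<in> PG T G" and rq: "PG_le r q"
    have r1: "finite (fst r)" "fst r \<subseteq> topspace T" "openin T (snd r)" "fst r \<subseteq> snd r"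
      and r2: "\<forall>u\<in>fst r. \<forall>v\<in>fst r. u \<noteq> v \<longrightarrow> (u, v) \<notin> G"
      using rP unfolding PG_mem by auto
    have yr: "y ` S \<subseteq> fst r" and rc: "snd r \<subseteq> \<Union>((fst \<circ> snd) ` S)"
      using rq unfolding PG_le_def q_def by auto
    define W where "W t = snd r \<inter> LU (snd (snd t)) (y t) \<inter> \<Inter>((\<lambda>z. SW z (y t)) ` (fst r - {y t}))" for t
    have Wprops: "openin T (W t) \<and> y t \<in> W t" if t: "t \<in> S" for t
    proof -
      have LF: "snd (snd t) \<in> F" using SF t by blast
      have LUt: "openin T (LU (snd (snd t)) (y t)) \<and> y t \<in> LU (snd (snd t)) (y t)"
        using LU[of "snd (snd t)" "y t"] LF yX[OF t] unfolding LUP_def by blast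
      have SWt: "openin T (SW z (y t)) \<and> y t \<in> SW z (y t)" if z: "z \<in> fst r - {y t}" for z
      proof -
        have "y t \<in> fst r" using yr t by blast
        then have "(z, y t) \<notin> G" using r2 z by blast
        then show ?thesis using SW[of z "y t"] z r1(2) yX[OF t] unfolding SWP_def by blast
      qed
      have "openin T (W t)" unfolding W_def
        using r1 LUt SWt by (intro openin_Int_Inter openin_Int) auto
      moreover have "y t \<in> W t" unfolding W_def using LUt SWt yr t r1(4) by blast
      ultimately show ?thesis by blast
    qed
    have inf: "infinite {m. \<forall>t\<in>S. xs m t \<in> W t}" by (rule nbhd) (use Wprops in blast)
    have "{m. \<forall>t\<in>S. xs m t \<in> W t} \<subseteq> {i. compatible (PG T G) PG_le (s i) r}"
    proof
      fix m assume "m \<in> {m. \<forall>t\<in>S. xs m t \<in> W t}"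
      then have mW: "\<And>t. t \<in> S \<Longrightarrow> xs m t \<in> W t" by blast
      define s' where "s' = (fst (s m) \<union> fst r, snd (s m) \<inter> snd r)"
      have sm: "finite (fst (s m))" "fst (s m) \<subseteq> topspace T" "openin T (snd (s m))" "fst (s m) \<subseteq> snd (s m)"
        and sm2: "\<forall>u\<in>fst (s m). \<forall>v\<in>fst (s m). u \<noteq> v \<longrightarrow> (u, v) \<notin> G"
        using sP[of m] unfolding PG_mem by auto
      have cross: "(u,z) \<notin> G \<and> (z,u) \<notin> G" if u: "u \<in> fst (s m)" and z: "z \<in> fst r" and uz: "u \<noteq> z" for u z
      proof -
        obtain t where t: "t \<in> S" "u = xs m t" using xs2[OF u] by blast
        have uW: "u \<in> W t" using mW t by blast
        have "(z,u) \<notin> G"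
        proof (cases "z = y t")
          case True
          have LF: "snd (snd t) \<in> F" using SF t by blast
          have "u \<in> snd (snd t)" using xs1[OF t(1)] t by blast
          moreover have "u \<in> LU (snd (snd t)) (y t)" using uW unfolding W_def by blast
          ultimately show ?thesis using LU[of "snd (snd t)" "y t"] LF yX[OF t(1)] True unfolding LUP_def by blast
        next
          case False
          then have zz: "z \<in> fst r - {y t}" using z by blast
          have "y t \<in> fst r" using yr t by blast
          then have "(z, y t) \<notin> G" using r2 z False by blast
          moreover have "u \<in> SW z (y t)" using uW zz unfolding W_def by blast
          ultimately show ?thesis using SW[of z "y t"] z r1(2) yX[OF t(1)] False unfolding SWP_def by blast
        qed
        then show ?thesis using symG by blast
      qed
      have smr: "fst (s m) \<subseteq> snd r"
      proof
        fix u assume u: "u \<in> fst (s m)"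
        obtain t where t: "t \<in> S" "u = xs m t" using xs2[OF u] by blast
        show "u \<in> snd r" using mW[OF t(1)] t(2) unfolding W_def by blast
      qed
      have "\<Union>((fst \<circ> snd) ` S) \<subseteq> snd (s m)" using clsD_sub[OF sc[of m]] by (simp add: UN_least)
      then have rsm: "fst r \<subseteq> snd (s m)" using r1(4) rc by (meson subset_trans)
      have "s' \<in> PG T G" unfolding s'_def PG_mem fst_conv snd_conv
        using sm sm2 r1 r2 cross smr rsm by (auto intro: openin_Int)
      moreover have "PG_le s' (s m)" "PG_le s' r" unfolding s'_def PG_le_def by auto
      ultimately show "m \<in> {i. compatible (PG T G) PG_le (s i) r}" unfolding compatible_def by blast
    qed
    then show "infinite {i. compatible (PG T G) PG_le (s i) r}" using inf infinite_super by blast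
  qed
qed




lemma singleton_PG:
  assumes "x \<in> topspace T"
  shows "({x}, topspace T) \<in> PG T G"
  using assms unfolding PG_mem by auto

lemma sc_imp_chi:
  assumes "sigma_centered (PG T G) PG_le"
  shows "chi_countable T G"
proof -
  have "\<exists>F. countable F \<and> (\<forall>C\<in>F. centered (PG T G) PG_le C) \<and> \<Union>F = PG T G"
    using assms unfolding sigma_centered_def .
  then obtain F where F0: "countable F \<and> (\<forall>C\<in>F. centered (PG T G) PG_le C) \<and> \<Union>F = PG T G" ..
  note F = F0[THEN conjunct1] F0[THEN conjunct2, THEN conjunct1] F0[THEN conjunct2, THEN conjunct2]
  define A where "A C = {x \<in> topspace T. ({x}, topspace T) \<in> C}" for C
  have "anticlique T G (A C)" if C: "C \<in> F" for C
    unfolding anticlique_def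
  proof (intro conjI ballI impI)
    show "A C \<subseteq> topspace T" unfolding A_def by blast
    fix x y assume x: "x \<in> A C" and y: "y \<in> A C" and xy: "x \<noteq> y"
    have cen: "centered (PG T G) PG_le C" using F C by blast
    have fb: "finite {({x}, topspace T), ({y}, topspace T)} \<and> {({x}, topspace T), ({y}, topspace T)} \<subseteq> C"
      using x y unfolding A_def by auto
    have C2: "\<forall>b. finite b \<and> b \<subseteq> C \<longrightarrow> (\<exists>q\<in>PG T G. \<forall>p\<in>b. PG_le q p)"
      using cen unfolding centered_def by (rule conjunct2)
    have "\<exists>q\<in>PG T G. \<forall>p\<in>{({x}, topspace T), ({y}, topspace T)}. PG_le q p"
      by (rule C2[rule_format, OF fb])
    then obtain q where q: "q \<in> PG T G" "\<forall>p\<in>{({x}, topspace T), ({y}, topspace T)}. PG_le q p" ..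
    have "x \<in> fst q" "y \<in> fst q" using q(2) unfolding PG_le_def by auto
    then show "(x,y) \<notin> G" using q(1) xy unfolding PG_mem by blast
  qed
  moreover have "topspace T \<subseteq> \<Union>(A ` F)"
  proof
    fix x assume x: "x \<in> topspace T"
    then have "({x}, topspace T) \<in> PG T G" by (rule singleton_PG)
    then have "({x}, topspace T) \<in> \<Union>F" using F(3) by simp
    then obtain C where "C \<in> F" "({x}, topspace T) \<in> C" by (rule UnionE)
    then show "x \<in> \<Union>(A ` F)" using x unfolding A_def by blast
  qed
  ultimately show ?thesis unfolding chi_countable_def
    by (intro exI[of _ "A ` F"] conjI countable_image[OF F(1)]) auto
qed

lemma (in Metric_space) slc_imp_lambda:
  assumes cg: "closed_graph mtopology G" and slc: "sigma_liminf_centered (PG mtopology G) PG_le"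
  shows "lambda_countable mtopology G"
proof -
  let ?T = mtopology
  have "\<exists>F. countable F \<and> (\<forall>C\<in>F. liminf_centered (PG ?T G) PG_le C) \<and> \<Union>F = PG ?T G"
    using slc unfolding sigma_liminf_centered_def .
  then obtain F where F0: "countable F \<and> (\<forall>C\<in>F. liminf_centered (PG ?T G) PG_le C) \<and> \<Union>F = PG ?T G" ..
  note F = F0[THEN conjunct1] F0[THEN conjunct2, THEN conjunct1] F0[THEN conjunct2, THEN conjunct2]
  have irr: "\<And>x. (x,x) \<notin> G" using cg unfolding closed_graph_def is_graph_def by blast
  define A where "A C = {x \<in> M. ({x}, M) \<in> C}" for C
  have "loose ?T G (A C)" if C: "C \<in> F" for C
    unfolding loose_def
  proof (intro conjI ballI)
    show "A C \<subseteq> topspace ?T" unfolding A_def by auto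
    fix x assume x: "x \<in> topspace ?T"
    then have xM: "x \<in> M" by simp
    show "\<exists>U. openin ?T U \<and> x \<in> U \<and> (\<forall>a\<in>A C \<inter> U. (x, a) \<notin> G)"
    proof (rule ccontr)
      assume nl: "\<not> ?thesis"
      have ex: "\<exists>a. a \<in> A C \<and> a \<in> mball x (1 / Suc i) \<and> (x,a) \<in> G" for i :: nat
      proof (rule ccontr)
        assume "\<not> (\<exists>a. a \<in> A C \<and> a \<in> mball x (1 / Suc i) \<and> (x,a) \<in> G)"
        then have H: "\<forall>a\<in>A C \<inter> mball x (1 / Suc i). (x, a) \<notin> G" by blast
        have "openin ?T (mball x (1 / Suc i))" "x \<in> mball x (1 / Suc i)" using xM by auto
        then show False using nl H by blast
      qed
      have "\<forall>i. \<exists>a. a \<in> A C \<and> a \<in> mball x (1 / Suc i) \<and> (x,a) \<in> G" using ex by blast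
      then have "\<exists>a. \<forall>i. a i \<in> A C \<and> a i \<in> mball x (1 / Suc i) \<and> (x, a i) \<in> G" by (rule choice)
      then obtain a where a0: "\<forall>i. a i \<in> A C \<and> a i \<in> mball x (1 / Suc i) \<and> (x, a i) \<in> G" ..
      have a: "\<And>i. a i \<in> A C \<and> a i \<in> mball x (1 / Suc i) \<and> (x, a i) \<in> G" using a0 by blast
      define s where "s i = ({a i}, M)" for i
      have rs: "range s \<subseteq> C" using a unfolding s_def A_def by auto
      have "liminf_centered (PG ?T G) PG_le C" using F C by blast
      then have L2: "\<forall>s :: nat \<Rightarrow> _. range s \<subseteq> C \<longrightarrow>
        (\<exists>q\<in>PG ?T G. \<forall>r\<in>PG ?T G. PG_le r q \<longrightarrow> infinite {i. compatible (PG ?T G) PG_le (s i) r})"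
        unfolding liminf_centered_def by (rule conjunct2)
      have "\<exists>q\<in>PG ?T G. \<forall>r\<in>PG ?T G. PG_le r q \<longrightarrow> infinite {i. compatible (PG ?T G) PG_le (s i) r}"
        by (rule L2[rule_format, OF rs])
      then obtain q where qP: "q \<in> PG ?T G"
        and qc: "\<forall>r\<in>PG ?T G. PG_le r q \<longrightarrow> infinite {i. compatible (PG ?T G) PG_le (s i) r}" ..
      have q1: "finite (fst q)" "fst q \<subseteq> M" "openin ?T (snd q)" "fst q \<subseteq> snd q"
        and q2: "\<forall>u\<in>fst q. \<forall>v\<in>fst q. u \<noteq> v \<longrightarrow> (u, v) \<notin> G"
        using qP unfolding PG_mem by auto
      show False
      proof (cases "x \<in> fst q")
        case True
        have "{i. compatible (PG ?T G) PG_le (s i) q} = {}"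
        proof (rule ccontr)
          assume "{i. compatible (PG ?T G) PG_le (s i) q} \<noteq> {}"
          then obtain i s' where s': "s' \<in> PG ?T G" "PG_le s' (s i)" "PG_le s' q"
            unfolding compatible_def by blast
          have "a i \<in> fst s'" "x \<in> fst s'" using s' True unfolding PG_le_def s_def by auto
          moreover have "x \<noteq> a i" using a[of i] irr by metis
          moreover have "(x, a i) \<in> G" using a by blast
          ultimately show False using s'(1) unfolding PG_mem by blast
        qed
        moreover have "PG_le q q" unfolding PG_le_def by simp
        ultimately show False using qc[rule_format, OF qP] by simp
      next
        case False
        define e where "e = (if fst q = {} then 1 else Min ((d x) ` fst q))"
        have epos: "e > 0"
        proof (cases "fst q = {}")
          case True then show ?thesis unfolding e_def by simp
        next
          case ne: False
          have "\<forall>z\<in>fst q. d x z > 0" using False q1(2) xM by fastforce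
          then show ?thesis unfolding e_def using ne q1(1) by simp
        qed
        have ele: "e \<le> d x z" if "z \<in> fst q" for z
        proof -
          have "fst q \<noteq> {}" using that by blast
          then show ?thesis unfolding e_def using that q1(1) by simp
        qed
        define r where "r = (fst q, snd q - mcball x (e/2))"
        have rsub: "fst q \<subseteq> snd q - mcball x (e/2)"
        proof
          fix z assume z: "z \<in> fst q"
          have "e/2 < d x z" using ele[OF z] epos by linarith
          then show "z \<in> snd q - mcball x (e/2)" using z q1(4) by auto
        qed
        have rP: "r \<in> PG ?T G" unfolding r_def PG_mem fst_conv snd_conv
          using q1 q2 rsub by (auto intro: openin_diff)
        have rq: "PG_le r q" unfolding r_def PG_le_def by auto
        obtain N :: nat where N: "inverse (of_nat (Suc N)) < e/2"
          using reals_Archimedean[of "e/2"] epos by auto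
        have "{i. compatible (PG ?T G) PG_le (s i) r} \<subseteq> {..<N}"
        proof
          fix i assume "i \<in> {i. compatible (PG ?T G) PG_le (s i) r}"
          then obtain s' where s': "s' \<in> PG ?T G" "PG_le s' (s i)" "PG_le s' r"
            unfolding compatible_def by blast
          have "a i \<in> fst s'" using s'(2) unfolding PG_le_def s_def by auto
          then have "a i \<in> snd r" using s' unfolding PG_mem PG_le_def by blast
          then have "a i \<notin> mcball x (e/2)" unfolding r_def by simp
          then have "e/2 < d x (a i)" using a[of i] by auto
          moreover have "d x (a i) < 1 / Suc i" using a[of i] by simp
          ultimately have "inverse (of_nat (Suc N)) < 1 / Suc i" using N by linarith
          then have lt: "inverse (real (Suc N)) < inverse (real (Suc i))" by (simp add: inverse_eq_divide)
          show "i \<in> {..<N}"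
          proof (rule ccontr)
            assume "i \<notin> {..<N}"
            then have "real (Suc N) \<le> real (Suc i)" by simp
            then have "inverse (real (Suc i)) \<le> inverse (real (Suc N))"
              by (rule le_imp_inverse_le) simp
            then show False using lt by linarith
          qed
        qed
        then have "finite {i. compatible (PG ?T G) PG_le (s i) r}" using finite_subset by blast
        then show False using qc[rule_format, OF rP rq] by simp
      qed
    qed
  qed
  moreover have "topspace ?T \<subseteq> \<Union>(A ` F)"
  proof
    fix x assume x: "x \<in> topspace ?T"
    then have "({x}, topspace ?T) \<in> PG ?T G" by (rule singleton_PG)
    then have "({x}, topspace ?T) \<in> \<Union>F" using F(3) by simp
    then obtain C where "C \<in> F" "({x}, M) \<in> C" by auto
    then show "x \<in> \<Union>(A ` F)" using x unfolding A_def by auto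
  qed
  ultimately show ?thesis unfolding lambda_countable_def
    by (intro exI[of _ "A ` F"] conjI countable_image[OF F(1)]) auto
qed




lemma cls_family:
  assumes cg: "closed_graph T G" and H: "Hausdorff_space T" and R: "regular_space T"
    and Bc: "countable B" and Bo: "\<forall>V\<in>B. openin T V"
    and Bb: "\<forall>U x. openin T U \<and> x \<in> U \<longrightarrow> (\<exists>V\<in>B. x \<in> V \<and> V \<subseteq> U)"
    and Fc: "topspace T \<subseteq> \<Union>F" and Fco: "countable F"
  shows "countable (cls T G ` {S. finite S \<and> S \<subseteq> B \<times> B \<times> F})"
    and "\<Union>(cls T G ` {S. finite S \<and> S \<subseteq> B \<times> B \<times> F}) = PG T G"
proof -
  have "countable (B \<times> B \<times> F)" using Bc Fco by simp
  then show "countable (cls T G ` {S. finite S \<and> S \<subseteq> B \<times> B \<times> F})"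
    by (intro countable_image countable_Collect_finite_subset)
  show "\<Union>(cls T G ` {S. finite S \<and> S \<subseteq> B \<times> B \<times> F}) = PG T G"
  proof
    show "\<Union>(cls T G ` {S. finite S \<and> S \<subseteq> B \<times> B \<times> F}) \<subseteq> PG T G" using cls_PG by blast
    show "PG T G \<subseteq> \<Union>(cls T G ` {S. finite S \<and> S \<subseteq> B \<times> B \<times> F})"
    proof
      fix p assume p: "p \<in> PG T G"
      have "\<exists>S. finite S \<and> S \<subseteq> B \<times> B \<times> F \<and> p \<in> cls T G S"
        by (rule cls_cover[OF cg H R Bo Bb Fc p])
      then show "p \<in> \<Union>(cls T G ` {S. finite S \<and> S \<subseteq> B \<times> B \<times> F})" by blast
    qed
  qed
qed

theorem theorem3p7:
  fixes T :: "'a topology" and G :: "('a \<times> 'a) set"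
  assumes "compact_space T" and "metrizable_space T" and "closed_graph T G"
  shows "(sigma_centered (PG T G) PG_le \<longleftrightarrow> chi_countable T G) \<and>
         (sigma_liminf_centered (PG T G) PG_le \<longleftrightarrow> lambda_countable T G)"
proof -
  obtain M d where Md: "Metric_space M d" and TM: "T = Metric_space.mtopology M d"
    using assms(2) unfolding metrizable_space_def by blast
  interpret Metric_space M d by (rule Md)
  have H: "Hausdorff_space T" using assms(2) by (rule metrizable_imp_Hausdorff_space)
  have R: "regular_space T" using assms(2) by (rule metrizable_imp_regular_space)
  have "second_countable T" using compact_second_countable assms(1) TM by simp
  then obtain B where Bc: "countable B" and Bo: "\<forall>V\<in>B. openin T V"
    and Bb: "\<forall>U x. openin T U \<and> x \<in> U \<longrightarrow> (\<exists>V\<in>B. x \<in> V \<and> V \<subseteq> U)"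
    unfolding second_countable_def by blast
  have a: "sigma_centered (PG T G) PG_le \<longleftrightarrow> chi_countable T G"
  proof
    assume "sigma_centered (PG T G) PG_le"
    then show "chi_countable T G" by (rule sc_imp_chi)
  next
    assume "chi_countable T G"
    then obtain F where Fco: "countable F" and FA: "\<forall>A\<in>F. anticlique T G A" and Fc: "topspace T \<subseteq> \<Union>F"
      unfolding chi_countable_def by blast
    note fam = cls_family[OF assms(3) H R Bc Bo Bb Fc Fco]
    have "\<forall>C\<in>cls T G ` {S. finite S \<and> S \<subseteq> B \<times> B \<times> F}. centered (PG T G) PG_le C"
    proof
      fix C assume "C \<in> cls T G ` {S. finite S \<and> S \<subseteq> B \<times> B \<times> F}"
      then obtain S where S: "S \<subseteq> B \<times> B \<times> F" "C = cls T G S" by blast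
      have "snd ` snd ` S \<subseteq> F" using S(1) by auto
      then show "centered (PG T G) PG_le C" using cls_centered[OF FA] S(2) by blast
    qed
    then show "sigma_centered (PG T G) PG_le" unfolding sigma_centered_def using fam by blast
  qed
  have b: "sigma_liminf_centered (PG T G) PG_le \<longleftrightarrow> lambda_countable T G"
  proof
    assume "sigma_liminf_centered (PG T G) PG_le"
    then show "lambda_countable T G" using slc_imp_lambda assms(3) TM by simp
  next
    assume "lambda_countable T G"
    then obtain F where Fco: "countable F" and FL: "\<forall>A\<in>F. loose T G A" and Fc: "topspace T \<subseteq> \<Union>F"
      unfolding lambda_countable_def by blast
    note fam = cls_family[OF assms(3) H R Bc Bo Bb Fc Fco]
    have "\<forall>C\<in>cls T G ` {S. finite S \<and> S \<subseteq> B \<times> B \<times> F}. liminf_centered (PG T G) PG_le C"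
    proof
      fix C assume "C \<in> cls T G ` {S. finite S \<and> S \<subseteq> B \<times> B \<times> F}"
      then obtain S where S: "finite S" "S \<subseteq> B \<times> B \<times> F" "C = cls T G S" by blast
      have "snd ` snd ` S \<subseteq> F" using S(2) by auto
      then show "liminf_centered (PG T G) PG_le C"
        using cls_liminf[OF assms(1) assms(3) FL _ S(1)] S(3) by blast
    qed
    then show "sigma_liminf_centered (PG T G) PG_le" unfolding sigma_liminf_centered_def using fam by blast
  qed
  show ?thesis using a b by blast
qed



end
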